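(* Let $n\ge 1$, let $(p_1,\dots,p_n)$ be a probability vector (i.e. $p_i\ge 0$ and $\sum_{i=1}^n p_i=1$), and let $\beta>0$. Let $n_0$ be the number of indices $i$ with $p_i=0$, and let $p_1',\dots,p_{n-n_0}'$ denote the strictly positive entries among $p_1,\dots,p_n$. Define the R\'enyi entropy of order $\beta$ (for $\beta\neq 1$) by \[ {_\beta}H_n(p_1,\dots,p_n)=(1-\beta)^{-1}\log_2\sum_{i=1}^n p_i^\beta . \] Then: \begin{enumerate} \item if $0<\beta<1$, \[ {_\beta}H_n(p_1,\dots,p_n)\ \ge\ (1-\beta)^{-1}\Big(\log_2(n-n_0)+\frac{\beta}{n-n_0}\sum_{i=1}^{n-n_0}\log_2 p_i'\Big); \] \item if $\beta>1$, \[ {_\beta}H_n(p_1,\dots,p_n)\ \le\ (1-\beta)^{-1}\Big(\log_2(n-n_0)+\frac{\beta}{n-n_0}\sum_{i=1}^{n-n_0}\log_2 p_i'\Big). \] \end{enumerate}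
   Context: Convention: $0^\beta=0$ for $\beta>0$. *)

theory Defs
  imports Complex_Main
begin

text \<open>Renyi entropy of order beta (beta ~= 1) of (p 1, ..., p n), base-2 logarithm.
  Note 0 powr beta = 0, matching the convention 0^beta = 0 for beta > 0.\<close>
definition renyi_entropy :: "real \<Rightarrow> nat \<Rightarrow> (nat \<Rightarrow> real) \<Rightarrow> real" where
  "renyi_entropy \<beta> n p = (1 / (1 - \<beta>)) * log 2 (\<Sum>i=1..n. p i powr \<beta>)"

end

theory Submission
  imports Defs
begin

lemma ln_mean_ge:
  fixes x :: "nat \<Rightarrow> real" and P :: "nat set"
  assumes "finite P" "P \<noteq> {}" "\<And>i. i \<in> P \<Longrightarrow> x i > 0"
  shows "(\<Sum>i\<in>P. ln (x i)) \<le> real (card P) * ln ((\<Sum>i\<in>P. x i) / real (card P))"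
proof -
  define m where "m = real (card P)"
  have m: "m > 0" using assms by (simp add: m_def card_gt_0_iff)
  define A where "A = (\<Sum>i\<in>P. x i) / m"
  have "(\<Sum>i\<in>P. x i) > 0" using assms by (intro sum_pos) auto
  hence A: "A > 0" using m by (simp add: A_def)
  have "(\<Sum>i\<in>P. ln (x i / A)) \<le> (\<Sum>i\<in>P. x i / A - 1)"
    by (intro sum_mono ln_le_minus_one) (use assms A in auto)
  also have "\<dots> = (\<Sum>i\<in>P. x i) / A - m"
    by (simp add: sum_subtractf sum_divide_distrib m_def)
  also have "\<dots> = 0" using m A by (auto simp: A_def)
  finally have "(\<Sum>i\<in>P. ln (x i / A)) \<le> 0" .
  moreover have "(\<Sum>i\<in>P. ln (x i / A)) = (\<Sum>i\<in>P. ln (x i)) - m * ln A"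
  proof -
    have "(\<Sum>i\<in>P. ln (x i / A)) = (\<Sum>i\<in>P. ln (x i) - ln A)"
      using assms A by (intro sum.cong) (auto simp: ln_div, metis less_irrefl)
    thus ?thesis by (simp add: sum_subtractf m_def)
  qed
  ultimately show ?thesis by (simp add: m_def [symmetric] A_def)
qed

theorem mainTheorem1:
  fixes n :: nat and p :: "nat \<Rightarrow> real" and \<beta> :: real
  assumes "n \<ge> 1"
    and "\<And>i. i \<in> {1..n} \<Longrightarrow> p i \<ge> 0"
    and "(\<Sum>i=1..n. p i) = 1"
    and "\<beta> > 0"
  defines "P \<equiv> {i \<in> {1..n}. p i > 0}"
  defines "n0 \<equiv> card {i \<in> {1..n}. p i = 0}"
  shows "(\<beta> < 1 \<longrightarrow> renyi_entropy \<beta> n p \<ge>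
            (1 / (1 - \<beta>)) * (log 2 (real (n - n0)) + (\<beta> / real (n - n0)) * (\<Sum>i\<in>P. log 2 (p i))))
       \<and> (\<beta> > 1 \<longrightarrow> renyi_entropy \<beta> n p \<le>
            (1 / (1 - \<beta>)) * (log 2 (real (n - n0)) + (\<beta> / real (n - n0)) * (\<Sum>i\<in>P. log 2 (p i))))"
proof -
  define Z where "Z = {i \<in> {1..n}. p i = 0}"
  have fP: "finite P" and fZ: "finite Z" by (auto simp: P_def Z_def)
  have un: "{1..n} = P \<union> Z" using assms(2) by (force simp: P_def Z_def)
  have dj: "P \<inter> Z = {}" by (auto simp: P_def Z_def)
  have "card {1..n} = card P + card Z" using un dj fP fZ by (simp add: card_Un_disjoint)
  hence mP: "n - n0 = card P" unfolding n0_def Z_def[symmetric] by simp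
  have "(\<Sum>i=1..n. p i) = (\<Sum>i\<in>P. p i) + (\<Sum>i\<in>Z. p i)"
    using un dj fP fZ by (simp add: sum.union_disjoint)
  also have "(\<Sum>i\<in>Z. p i) = 0" by (simp add: Z_def)
  finally have "(\<Sum>i\<in>P. p i) = 1" using assms(3) by simp
  hence Pne: "P \<noteq> {}" by auto
  define m where "m = real (card P)"
  have m: "m > 0" using fP Pne by (simp add: m_def card_gt_0_iff)
  define S where "S = (\<Sum>i\<in>P. p i powr \<beta>)"
  have Ssum: "(\<Sum>i=1..n. p i powr \<beta>) = S"
  proof -
    have "(\<Sum>i=1..n. p i powr \<beta>) = S + (\<Sum>i\<in>Z. p i powr \<beta>)"
      using un dj fP fZ by (simp add: sum.union_disjoint S_def)
    also have "(\<Sum>i\<in>Z. p i powr \<beta>) = 0" by (simp add: Z_def)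
    finally show ?thesis by simp
  qed
  have ppos: "\<And>i. i \<in> P \<Longrightarrow> p i > 0" by (simp add: P_def)
  have Spos: "S > 0" unfolding S_def using fP Pne ppos by (intro sum_pos) (auto, metis less_irrefl)
  have key: "(\<Sum>i\<in>P. ln (p i powr \<beta>)) \<le> m * ln (S / m)"
    unfolding S_def m_def by (rule ln_mean_ge[OF fP Pne]) (metis ppos powr_gt_zero less_irrefl)
  have "(\<Sum>i\<in>P. ln (p i powr \<beta>)) = \<beta> * (\<Sum>i\<in>P. ln (p i))"
    using ppos by (simp add: ln_powr sum_distrib_left)
  hence "\<beta> * (\<Sum>i\<in>P. ln (p i)) \<le> m * (ln S - ln m)"
    using key Spos m by (simp add: ln_div)
  hence "ln m + (\<beta> / m) * (\<Sum>i\<in>P. ln (p i)) \<le> ln S"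
    using m by (simp add: field_simps)
  hence "(ln m + (\<beta> / m) * (\<Sum>i\<in>P. ln (p i))) / ln 2 \<le> ln S / ln 2"
    by (simp add: divide_right_mono)
  moreover have "(ln m + (\<beta> / m) * (\<Sum>i\<in>P. ln (p i))) / ln 2
      = log 2 m + (\<beta> / m) * (\<Sum>i\<in>P. log 2 (p i))"
    by (simp add: log_def add_divide_distrib sum_divide_distrib[symmetric])
  ultimately have L: "log 2 m + (\<beta> / m) * (\<Sum>i\<in>P. log 2 (p i)) \<le> log 2 S"
    by (simp add: log_def)
  have R: "renyi_entropy \<beta> n p = (1 / (1 - \<beta>)) * log 2 S"
    unfolding renyi_entropy_def Ssum ..
  show ?thesis
  proof (intro conjI impI)
    assume "\<beta> < 1"
    thus "renyi_entropy \<beta> n p \<ge>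
            (1 / (1 - \<beta>)) * (log 2 (real (n - n0)) + (\<beta> / real (n - n0)) * (\<Sum>i\<in>P. log 2 (p i)))"
      unfolding R mP m_def[symmetric] using L by (intro mult_left_mono) auto
  next
    assume "\<beta> > 1"
    hence "1 / (1 - \<beta>) \<le> 0" by simp
    thus "renyi_entropy \<beta> n p \<le>
            (1 / (1 - \<beta>)) * (log 2 (real (n - n0)) + (\<beta> / real (n - n0)) * (\<Sum>i\<in>P. log 2 (p i)))"
      unfolding R mP m_def[symmetric] using L by (intro mult_left_mono_neg) auto
  qed
qed

end
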